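(* Let $X$ be a real normed linear space, $x\in X\setminus\{\theta\}$ and $\varepsilon\in[0,2)$. Then the following are equivalent: (i) $x$ is $\varepsilon$-smooth, i.e. $\operatorname{diam} J(x)\le\varepsilon$; (ii) $\sup_{y\in S_X}\{\rho'_+(x,y)-\rho'_-(x,y)\}\le\varepsilon\|x\|$.
   Context: $S_X$ is the unit sphere of $X$, $X^*$ the dual space, $S_{X^*}$ its unit sphere. For $x\neq\theta$, $J(x)=\{f\in S_{X^*}: f(x)=\|x\|\}$ is the set of supporting functionals at $x$, and $\operatorname{diam}A=\sup_{f,g\in A}\|f-g\|$. The norm derivatives are $\rho'_{+}(x,y)=\lim_{\lambda\to0^+}\frac{\|x+\lambda y\|^2-\|x\|^2}{2\lambda}$ and $\rho'_{-}(x,y)=\lim_{\lambda\to0^-}\frac{\|x+\lambda y\|^2-\|x\|^2}{2\lambda}$. *)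

theory Defs
  imports "HOL-Analysis.Analysis"
begin

text \<open>Dual space X^* is rendered as bounded linear functionals to real (blinfun)
  with the operator norm.  J(x): supporting functionals at x.\<close>
definition supp_funcs :: "'a::real_normed_vector \<Rightarrow> ('a \<Rightarrow>\<^sub>L real) set" where
  "supp_funcs x = {f. norm f = 1 \<and> blinfun_apply f x = norm x}"

definition rho_plus :: "'a::real_normed_vector \<Rightarrow> 'a \<Rightarrow> real" where
  "rho_plus x y = Lim (at_right 0) (\<lambda>t::real. (norm (x + t *\<^sub>R y) ^ 2 - norm x ^ 2) / (2 * t))"

definition rho_minus :: "'a::real_normed_vector \<Rightarrow> 'a \<Rightarrow> real" where
  "rho_minus x y = Lim (at_left 0) (\<lambda>t::real. (norm (x + t *\<^sub>R y) ^ 2 - norm x ^ 2) / (2 * t))"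

definition eps_smooth :: "real \<Rightarrow> 'a::real_normed_vector \<Rightarrow> bool" where
  "eps_smooth \<epsilon> x \<longleftrightarrow> diameter (supp_funcs x) \<le> \<epsilon>"

end

theory Submission
  imports Defs
begin


definition sublin :: "('a::real_vector \<Rightarrow> real) \<Rightarrow> bool" where
  "sublin p \<longleftrightarrow> (\<forall>a b. p (a + b) \<le> p a + p b) \<and> (\<forall>c a. c \<ge> 0 \<longrightarrow> p (c *\<^sub>R a) = c * p a)"

lemma sublin_add: "sublin p \<Longrightarrow> p (a + b) \<le> p a + p b"
  unfolding sublin_def by blast

lemma sublin_scale: "sublin p \<Longrightarrow> c \<ge> 0 \<Longrightarrow> p (c *\<^sub>R a) = c * p a"
  unfolding sublin_def by blast

lemma sublin_0: "sublin p \<Longrightarrow> p 0 = 0"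
  using sublin_scale[of p 0 0] by simp

lemma sublin_neg: "sublin p \<Longrightarrow> - p (- a) \<le> p a"
  using sublin_add[of p a "-a"] sublin_0[of p] by simp

definition shift :: "('a::real_vector \<Rightarrow> real) \<Rightarrow> 'a \<Rightarrow> 'a \<Rightarrow> real" where
  "shift p a z = Inf ((\<lambda>s. p (z + s *\<^sub>R a) - s * p a) ` {0..})"

lemma shift_bdd:
  assumes "sublin p"
  shows "bdd_below ((\<lambda>s. p (z + s *\<^sub>R a) - s * p a) ` {0..})"
proof (rule bdd_belowI2[where m = "- p (- z)"])
  fix s :: real assume "s \<in> {0..}"
  then have "p (s *\<^sub>R a) = s * p a" using sublin_scale[OF assms] by auto
  moreover have "p (s *\<^sub>R a) \<le> p (z + s *\<^sub>R a) + p (- z)"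
    using sublin_add[OF assms, of "z + s *\<^sub>R a" "- z"] by simp
  ultimately show "- p (- z) \<le> p (z + s *\<^sub>R a) - s * p a" by simp
qed

lemma shift_le:
  assumes "sublin p" "s \<ge> 0"
  shows "shift p a z \<le> p (z + s *\<^sub>R a) - s * p a"
  unfolding shift_def using assms shift_bdd[OF assms(1)] by (intro cInf_lower) auto

lemma shift_ge:
  assumes "\<And>s. s \<ge> 0 \<Longrightarrow> c \<le> p (z + s *\<^sub>R a) - s * p a"
  shows "c \<le> shift p a z"
  unfolding shift_def using assms by (intro cInf_greatest) auto

lemma shift_below: "sublin p \<Longrightarrow> shift p a z \<le> p z"
  using shift_le[of p 0 a z] by simp

lemma shift_neg: "sublin p \<Longrightarrow> shift p a (- a) \<le> - p a"
  using shift_le[of p 1 a "-a"] sublin_0[of p] by simp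

lemma shift_sublin:
  assumes p: "sublin p"
  shows "sublin (shift p a)"
  unfolding sublin_def
proof (intro conjI allI impI)
  fix z w
  have "shift p a (z + w) - (p (w + t *\<^sub>R a) - t * p a) \<le> shift p a z" if t: "t \<ge> 0" for t
  proof (rule shift_ge)
    fix s :: real assume s: "s \<ge> 0"
    have "shift p a (z + w) \<le> p ((z + w) + (s + t) *\<^sub>R a) - (s + t) * p a"
      using shift_le[OF p] s t by simp
    also have "p ((z + w) + (s + t) *\<^sub>R a) \<le> p (z + s *\<^sub>R a) + p (w + t *\<^sub>R a)"
      using sublin_add[OF p, of "z + s *\<^sub>R a" "w + t *\<^sub>R a"] by (simp add: algebra_simps)
    finally show "shift p a (z + w) - (p (w + t *\<^sub>R a) - t * p a) \<le> p (z + s *\<^sub>R a) - s * p a"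
      by (simp add: algebra_simps)
  qed
  then have "shift p a (z + w) - shift p a z \<le> shift p a w"
    by (intro shift_ge) (smt (verit))
  then show "shift p a (z + w) \<le> shift p a z + shift p a w" by simp
next
  fix c :: real and z assume c: "c \<ge> 0"
  show "shift p a (c *\<^sub>R z) = c * shift p a z"
  proof (cases "c = 0")
    case True
    have "shift p a 0 = 0"
    proof (rule antisym)
      show "shift p a 0 \<le> 0" using shift_below[OF p, of a 0] sublin_0[OF p] by simp
      show "0 \<le> shift p a 0"
        by (rule shift_ge) (simp add: sublin_scale[OF p])
    qed
    then show ?thesis using True by simp
  next
    case False
    then have c: "c > 0" using c by simp
    show ?thesis
    proof (rule antisym)
      have "shift p a (c *\<^sub>R z) / c \<le> shift p a z"
      proof (rule shift_ge)
        fix s :: real assume s: "s \<ge> 0"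
        have "shift p a (c *\<^sub>R z) \<le> p (c *\<^sub>R z + (c * s) *\<^sub>R a) - (c * s) * p a"
          using shift_le[OF p] s c by simp
        also have "p (c *\<^sub>R z + (c * s) *\<^sub>R a) = c * p (z + s *\<^sub>R a)"
          using sublin_scale[OF p, of c "z + s *\<^sub>R a"] c by (simp add: algebra_simps)
        finally show "shift p a (c *\<^sub>R z) / c \<le> p (z + s *\<^sub>R a) - s * p a"
          using c by (simp add: divide_simps algebra_simps)
      qed
      then show "shift p a (c *\<^sub>R z) \<le> c * shift p a z" using c by (simp add: divide_simps mult.commute)
    next
      show "c * shift p a z \<le> shift p a (c *\<^sub>R z)"
      proof (rule shift_ge)
        fix s :: real assume s: "s \<ge> 0"
        have "c * shift p a z \<le> c * (p (z + (s / c) *\<^sub>R a) - (s / c) * p a)"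
          using shift_le[OF p, of "s / c" a z] s c by simp
        also have "\<dots> = c * p (z + (s / c) *\<^sub>R a) - s * p a"
          using c by (simp add: algebra_simps)
        also have "c * p (z + (s / c) *\<^sub>R a) = p (c *\<^sub>R z + s *\<^sub>R a)"
          using sublin_scale[OF p, of c "z + (s / c) *\<^sub>R a"] c by (simp add: algebra_simps)
        finally show "c * shift p a z \<le> p (c *\<^sub>R z + s *\<^sub>R a) - s * p a"
          using c by (simp add: algebra_simps)
      qed
    qed
  qed
qed


lemma exists_minimal:
  fixes q :: "'a::real_vector \<Rightarrow> real"
  assumes q: "sublin q"
  shows "\<exists>m. sublin m \<and> (\<forall>z. m z \<le> q z) \<and> (\<forall>r. sublin r \<and> (\<forall>z. r z \<le> m z) \<longrightarrow> r = m)"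
proof -
  define A where "A = {r. sublin r \<and> (\<forall>z. r z \<le> q z)}"
  define P where "P = (\<lambda>r r' :: 'a \<Rightarrow> real. \<forall>z. r' z \<le> r z)"
  have po: "partial_order_on A (relation_of P A)"
    unfolding partial_order_on_def preorder_on_def refl_on_def trans_on_def antisym_on_def
      relation_of_def P_def
    apply (auto intro: order_trans)
    by (rule ext, meson antisym)
  have ch: "\<exists>u \<in> A. \<forall>a \<in> C. P a u" if C: "C \<in> Chains (relation_of P A)" for C
  proof (cases "C = {}")
    case True
    then show ?thesis using q unfolding A_def by auto
  next
    case False
    have CA: "C \<subseteq> A" using C unfolding Chains_def relation_of_def by auto
    have comp: "P r1 r2 \<or> P r2 r1" if "r1 \<in> C" "r2 \<in> C" for r1 r2
      using C that unfolding Chains_def relation_of_def by auto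
    have subl: "sublin r" and rq: "\<And>z. r z \<le> q z" if "r \<in> C" for r
      using CA that unfolding A_def by auto
    define u where "u = (\<lambda>z. Inf ((\<lambda>r. r z) ` C))"
    have bdd: "bdd_below ((\<lambda>r. r z) ` C)" for z
    proof (rule bdd_belowI2[where m = "- q (- z)"])
      fix r assume "r \<in> C"
      then show "- q (- z) \<le> r z" using sublin_neg[OF subl[of r], of z] rq[of r "-z"] by simp
    qed
    have ulow: "u z \<le> r z" if "r \<in> C" for r z
      unfolding u_def using bdd that by (intro cInf_lower) auto
    have ugr: "c \<le> u z" if "\<And>r. r \<in> C \<Longrightarrow> c \<le> r z" for c z
      unfolding u_def using that False by (intro cInf_greatest) auto
    obtain r0 where r0: "r0 \<in> C" using False by auto
    have "sublin u"
      unfolding sublin_def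
    proof (intro conjI allI impI)
      fix a b
      have "u (a + b) \<le> r1 a + r2 b" if "r1 \<in> C" "r2 \<in> C" for r1 r2
      proof (cases "P r1 r2")
        case True
        then have "u (a + b) \<le> r2 (a + b)" using ulow that by auto
        also have "\<dots> \<le> r2 a + r2 b" using sublin_add[OF subl[OF that(2)]] .
        finally show ?thesis using True unfolding P_def by (smt (verit))
      next
        case False
        then have "P r2 r1" using comp that by auto
        then have "u (a + b) \<le> r1 (a + b)" using ulow that by auto
        also have "\<dots> \<le> r1 a + r1 b" using sublin_add[OF subl[OF that(1)]] .
        finally show ?thesis using \<open>P r2 r1\<close> unfolding P_def by (smt (verit))
      qed
      then have "u (a + b) - r2 b \<le> u a" if "r2 \<in> C" for r2
        using that by (intro ugr) (smt (verit))
      then have "u (a + b) - u a \<le> u b"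
        by (intro ugr) (smt (verit))
      then show "u (a + b) \<le> u a + u b" by simp
    next
      fix c :: real and a assume c: "c \<ge> 0"
      show "u (c *\<^sub>R a) = c * u a"
      proof (cases "c = 0")
        case True
        have "u 0 = 0"
          by (rule antisym, rule order_trans[OF ulow[OF r0]])
             (auto simp: sublin_0[OF subl] sublin_0[OF subl[OF r0]] intro!: ugr)
        then show ?thesis using True by simp
      next
        case False
        then have c: "c > 0" using c by simp
        show ?thesis
        proof (rule antisym)
          have "u (c *\<^sub>R a) / c \<le> u a"
          proof (rule ugr)
            fix r assume r: "r \<in> C"
            have "u (c *\<^sub>R a) \<le> r (c *\<^sub>R a)" using ulow[OF r] .
            also have "\<dots> = c * r a" using sublin_scale[OF subl[OF r]] c by simp
            finally show "u (c *\<^sub>R a) / c \<le> r a" using c by (simp add: divide_simps mult.commute)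
          qed
          then show "u (c *\<^sub>R a) \<le> c * u a" using c by (simp add: divide_simps mult.commute)
        next
          show "c * u a \<le> u (c *\<^sub>R a)"
          proof (rule ugr)
            fix r assume r: "r \<in> C"
            have "c * u a \<le> c * r a" using ulow[OF r] c by simp
            also have "\<dots> = r (c *\<^sub>R a)" using sublin_scale[OF subl[OF r]] c by simp
            finally show "c * u a \<le> r (c *\<^sub>R a)" .
          qed
        qed
      qed
    qed
    moreover have "\<forall>z. u z \<le> q z" using ulow[OF r0] rq[OF r0] by (meson order_trans)
    moreover have "\<forall>a \<in> C. P a u" unfolding P_def using ulow by auto
    ultimately show ?thesis unfolding A_def by auto
  qed
  obtain m where "m \<in> A" "\<forall>a \<in> A. P m a \<longrightarrow> a = m"
    using predicate_Zorn[OF po ch] by blast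
  then show ?thesis unfolding A_def P_def
    by simp (metis order_trans)
qed


lemma minimal_linear:
  assumes m: "sublin m" and min: "\<And>r. sublin r \<Longrightarrow> (\<forall>z. r z \<le> m z) \<Longrightarrow> r = m"
  shows "linear m"
proof -
  have neg: "m (- a) = - m a" for a
  proof -
    have "shift m a = m" using min[OF shift_sublin[OF m]] shift_below[OF m] by blast
    then have "m (- a) \<le> - m a" using shift_neg[OF m, of a] by simp
    then show ?thesis using sublin_neg[OF m, of a] by simp
  qed
  show ?thesis
  proof (rule linearI)
    fix a b
    have "m a + m b = - m (- a) - m (- b)" using neg by simp
    also have "\<dots> \<le> - m (- a + - b)" using sublin_add[OF m, of "-a" "-b"] by simp
    also have "\<dots> = m (a + b)" using neg[of "a + b"] by simp
    finally show "m (a + b) = m a + m b" using sublin_add[OF m, of a b] by simp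
  next
    fix c :: real and a
    show "m (c *\<^sub>R a) = c *\<^sub>R m a"
    proof (cases "c \<ge> 0")
      case True then show ?thesis using sublin_scale[OF m] by simp
    next
      case False
      have "m (c *\<^sub>R a) = m ((- c) *\<^sub>R (- a))" by simp
      also have "\<dots> = (- c) * m (- a)" by (rule sublin_scale[OF m]) (use False in simp)
      also have "\<dots> = c * m a" using neg[of a] by simp
      finally show ?thesis by simp
    qed
  qed
qed

lemma exists_linear_below:
  fixes q :: "'a::real_vector \<Rightarrow> real"
  assumes "sublin q"
  shows "\<exists>f. linear f \<and> (\<forall>z. f z \<le> q z)"
  using exists_minimal[OF assms] minimal_linear by blast

lemma hahn_banach_point:
  fixes p :: "'a::real_vector \<Rightarrow> real"
  assumes p: "sublin p"
  shows "\<exists>f. linear f \<and> (\<forall>z. f z \<le> p z) \<and> f y = p y"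
proof -
  obtain f where f: "linear f" "\<And>z. f z \<le> shift p y z"
    using exists_linear_below[OF shift_sublin[OF p, of y]] by blast
  have le: "f z \<le> p z" for z using f(2)[of z] shift_below[OF p, of y z] by simp
  have "f (- y) \<le> - p y" using f(2)[of "-y"] shift_neg[OF p, of y] by simp
  then have "f y \<ge> p y" using linear_neg[OF f(1), of y] by simp
  then show ?thesis using f(1) le[of y] le by (intro exI[of _ f]) auto
qed



definition dq :: "'a::real_normed_vector \<Rightarrow> 'a \<Rightarrow> real \<Rightarrow> real" where
  "dq x z t = (norm (x + t *\<^sub>R z) - norm x) / t"

definition dd :: "'a::real_normed_vector \<Rightarrow> 'a \<Rightarrow> real" where
  "dd x z = Inf (dq x z ` {0<..})"

lemma dq_mono:
  assumes "0 < s" "s \<le> t"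
  shows "dq x z s \<le> dq x z t"
proof -
  have t: "t > 0" using assms by simp
  have eq: "x + s *\<^sub>R z = (s / t) *\<^sub>R (x + t *\<^sub>R z) + (1 - s / t) *\<^sub>R x"
    using t by (simp add: algebra_simps)
  have "norm (x + s *\<^sub>R z) \<le> norm ((s / t) *\<^sub>R (x + t *\<^sub>R z)) + norm ((1 - s / t) *\<^sub>R x)"
    by (subst eq) (rule norm_triangle_ineq)
  also have "\<dots> = (s / t) * norm (x + t *\<^sub>R z) + (1 - s / t) * norm x"
    using assms by simp
  finally have "norm (x + s *\<^sub>R z) - norm x \<le> (s / t) * (norm (x + t *\<^sub>R z) - norm x)"
    by (simp add: algebra_simps)
  then have "(norm (x + s *\<^sub>R z) - norm x) / s \<le> ((s / t) * (norm (x + t *\<^sub>R z) - norm x)) / s"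
    using assms by (intro divide_right_mono) auto
  also have "\<dots> = (norm (x + t *\<^sub>R z) - norm x) / t"
    using assms by simp
  finally show ?thesis unfolding dq_def .
qed

lemma dq_lb:
  assumes "t > 0" shows "- norm z \<le> dq x z t"
proof -
  have "norm x \<le> norm (x + t *\<^sub>R z) + norm (x - (x + t *\<^sub>R z))"
    by (rule norm_triangle_sub)
  then have "- norm z * t \<le> norm (x + t *\<^sub>R z) - norm x" using assms by (simp add: mult.commute)
  then show ?thesis unfolding dq_def using assms by (simp add: pos_le_divide_eq)
qed

lemma dq_ub:
  assumes "t > 0" shows "dq x z t \<le> norm z"
proof -
  have "norm (x + t *\<^sub>R z) \<le> norm x + norm (t *\<^sub>R z)" by (rule norm_triangle_ineq)
  then have "norm (x + t *\<^sub>R z) - norm x \<le> norm z * t" using assms by (simp add: mult.commute)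
  then show ?thesis unfolding dq_def using assms by (simp add: pos_divide_le_eq)
qed

lemma dq_bdd: "bdd_below (dq x z ` {0<..})"
  by (rule bdd_belowI2[where m = "- norm z"]) (simp add: dq_lb)

lemma dd_le: "t > 0 \<Longrightarrow> dd x z \<le> dq x z t"
  unfolding dd_def by (rule cInf_lower[OF _ dq_bdd]) simp

lemma dd_ge: "(\<And>t. t > 0 \<Longrightarrow> c \<le> dq x z t) \<Longrightarrow> c \<le> dd x z"
  unfolding dd_def by (rule cInf_greatest) auto

lemma dd_lb: "- norm z \<le> dd x z"
  by (rule dd_ge) (rule dq_lb)

lemma dd_ub: "dd x z \<le> norm z"
  using dd_le[of 1 x z] dq_ub[of 1 x z] by simp

lemma dd_tendsto: "(dq x z \<longlongrightarrow> dd x z) (at_right 0)"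
proof (rule tendstoI)
  fix e :: real assume e: "e > 0"
  have "dd x z < dd x z + e" using e by simp
  moreover have ne: "dq x z ` {0<..} \<noteq> {}" by auto
  ultimately have "\<exists>v\<in>dq x z ` {0<..}. v < dd x z + e"
    using cInf_less_iff[OF ne dq_bdd] unfolding dd_def by blast
  then obtain t0 where t0: "t0 > 0" "dq x z t0 < dd x z + e" by auto
  show "\<forall>\<^sub>F t in at_right 0. dist (dq x z t) (dd x z) < e"
    unfolding eventually_at_right_field
  proof (intro exI[of _ t0] conjI allI impI)
    fix t :: real assume "t > 0" "t < t0"
    then have "dd x z \<le> dq x z t" "dq x z t \<le> dq x z t0"
      using dd_le[of t x z] dq_mono[of t t0 x z] by auto
    then show "dist (dq x z t) (dd x z) < e" using t0 by (simp add: dist_real_def)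
  qed (use t0 in auto)
qed

lemma half_sum: "(1/2::real) *\<^sub>R y + (1/2) *\<^sub>R y = (y::'a::real_vector)"
proof -
  have "(1/2::real) *\<^sub>R y + (1/2) *\<^sub>R y = (1/2 + 1/2) *\<^sub>R y" by (rule scaleR_add_left[symmetric])
  also have "(1/2 + 1/2 :: real) = 1" by simp
  finally show ?thesis by simp
qed

lemma half_div: "t > 0 \<Longrightarrow> (((A::real) + B) / 2 - n) / t = (A - n) / (2 * t) + (B - n) / (2 * t)"
  by (simp add: field_simps)

lemma dq_add:
  assumes "t > 0"
  shows "dq x (a + b) t \<le> dq x a (2 * t) + dq x b (2 * t)"
proof -
  have eq: "x + t *\<^sub>R (a + b) = (1/2) *\<^sub>R (x + (2 * t) *\<^sub>R a) + (1/2) *\<^sub>R (x + (2 * t) *\<^sub>R b)"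
    by (simp add: algebra_simps half_sum)
  have "norm (x + t *\<^sub>R (a + b)) \<le> norm ((1/2) *\<^sub>R (x + (2 * t) *\<^sub>R a)) + norm ((1/2) *\<^sub>R (x + (2 * t) *\<^sub>R b))"
    by (subst eq) (rule norm_triangle_ineq)
  then have "norm (x + t *\<^sub>R (a + b)) \<le> (norm (x + (2 * t) *\<^sub>R a) + norm (x + (2 * t) *\<^sub>R b)) / 2"
    by simp
  then have "(norm (x + t *\<^sub>R (a + b)) - norm x) / t \<le> ((norm (x + (2 * t) *\<^sub>R a) + norm (x + (2 * t) *\<^sub>R b)) / 2 - norm x) / t"
    using assms by (intro divide_right_mono) auto
  then show ?thesis unfolding dq_def half_div[OF assms] .
qed

lemma dq_scale:
  assumes "c > 0" "t > 0"
  shows "dq x (c *\<^sub>R a) t = c * dq x a (c * t)"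
proof -
  have "(c * t) *\<^sub>R a = t *\<^sub>R (c *\<^sub>R a)" by simp
  then show ?thesis unfolding dq_def using assms by (simp add: field_simps)
qed

lemma dd_sublin: "sublin (dd x)"
  unfolding sublin_def
proof (intro conjI allI impI)
  fix a b
  have "dd x (a + b) \<le> dq x a s + dq x b s'" if "s > 0" "s' > 0" for s s'
  proof -
    define m where "m = min s s'"
    have m: "m > 0" "m \<le> s" "m \<le> s'" using that unfolding m_def by auto
    have "dd x (a + b) \<le> dq x (a + b) (m / 2)" using m by (intro dd_le) simp
    also have "\<dots> \<le> dq x a m + dq x b m" using dq_add[of "m / 2" x a b] m by simp
    also have "\<dots> \<le> dq x a s + dq x b s'" using dq_mono m by (intro add_mono) auto
    finally show ?thesis .
  qed
  then have "dd x (a + b) - dq x b s' \<le> dd x a" if "s' > 0" for s'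
    using that by (intro dd_ge) (smt (verit))
  then have "dd x (a + b) - dd x a \<le> dd x b"
    by (intro dd_ge) (smt (verit))
  then show "dd x (a + b) \<le> dd x a + dd x b" by simp
next
  fix c :: real and a assume c: "c \<ge> 0"
  show "dd x (c *\<^sub>R a) = c * dd x a"
  proof (cases "c = 0")
    case True
    have "dd x 0 = 0"
      using dd_lb[of 0 x] dd_ub[of x 0] by simp
    then show ?thesis using True by simp
  next
    case False
    then have c: "c > 0" using c by simp
    show ?thesis
    proof (rule antisym)
      have "dd x (c *\<^sub>R a) / c \<le> dd x a"
      proof (rule dd_ge)
        fix t :: real assume t: "t > 0"
        have "dd x (c *\<^sub>R a) \<le> dq x (c *\<^sub>R a) (t / c)" using t c by (intro dd_le) simp
        also have "\<dots> = c * dq x a t" using dq_scale[of c "t / c" x a] t c by simp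
        finally show "dd x (c *\<^sub>R a) / c \<le> dq x a t" using c by (simp add: divide_simps mult.commute)
      qed
      then show "dd x (c *\<^sub>R a) \<le> c * dd x a" using c by (simp add: divide_simps mult.commute)
    next
      show "c * dd x a \<le> dd x (c *\<^sub>R a)"
      proof (rule dd_ge)
        fix t :: real assume t: "t > 0"
        have "c * dd x a \<le> c * dq x a (c * t)" using t c dd_le[of "c * t" x a] by simp
        also have "\<dots> = dq x (c *\<^sub>R a) t" using dq_scale[of c t x a] t c by simp
        finally show "c * dd x a \<le> dq x (c *\<^sub>R a) t" .
      qed
    qed
  qed
qed

lemma dd_self: "dd x x = norm x"
proof -
  have "dq x x t = norm x" if "t > 0" for t
  proof -
    have "x + t *\<^sub>R x = (1 + t) *\<^sub>R x" by (simp add: algebra_simps)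
    then have "norm (x + t *\<^sub>R x) = (1 + t) * norm x" using that by simp
    then show ?thesis unfolding dq_def using that by (simp add: divide_simps algebra_simps)
  qed
  then show ?thesis using dd_le[of 1 x x] dd_ge[of "norm x" x x] by force
qed

lemma dd_negself: "dd x (- x) = - norm x"
proof -
  have "x + (1/2) *\<^sub>R (- x) = (1/2) *\<^sub>R x" using half_sum[of x] by (simp add: algebra_simps)
  then have "dq x (- x) (1/2) = - norm x" unfolding dq_def by simp
  then show ?thesis using dd_le[of "1/2" x "-x"] dd_lb[of "-x" x] by simp
qed



lemma supp_le_dd:
  assumes F: "F \<in> supp_funcs x"
  shows "blinfun_apply F z \<le> dd x z"
proof (rule dd_ge)
  fix t :: real assume t: "t > 0"
  have nF: "norm F = 1" and Fx: "blinfun_apply F x = norm x" using F unfolding supp_funcs_def by auto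
  have "blinfun_apply F (x + t *\<^sub>R z) \<le> norm (blinfun_apply F (x + t *\<^sub>R z))" by simp
  also have "\<dots> \<le> norm F * norm (x + t *\<^sub>R z)" by (rule norm_blinfun)
  finally have "norm x + t * blinfun_apply F z \<le> norm (x + t *\<^sub>R z)"
    using nF Fx by (simp add: blinfun.add_right blinfun.scaleR_right)
  then show "blinfun_apply F z \<le> dq x z t" unfolding dq_def using t
    by (simp add: pos_le_divide_eq mult.commute)
qed

lemma lin_to_supp:
  fixes x :: "'a::real_normed_vector"
  assumes x: "x \<noteq> 0" and lin: "linear f" and le: "\<And>z. f z \<le> dd x z"
  shows "Blinfun f \<in> supp_funcs x \<and> blinfun_apply (Blinfun f) = f"
proof -
  have ab: "\<bar>f z\<bar> \<le> norm z" for z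
  proof -
    have "f z \<le> norm z" using le[of z] dd_ub[of x z] by simp
    moreover have "f (- z) \<le> norm z" using le[of "-z"] dd_ub[of x "-z"] by simp
    ultimately show ?thesis using linear_neg[OF lin, of z] by simp
  qed
  have bl: "bounded_linear f"
    by (rule bounded_linear_intro[where K = 1])
       (use ab in \<open>auto simp: linear_add[OF lin] linear_scale[OF lin]\<close>)
  have ap: "blinfun_apply (Blinfun f) = f" using bounded_linear_Blinfun_apply[OF bl] .
  have fx: "f x = norm x"
  proof -
    have "f x \<le> norm x" using le[of x] dd_self[of x] by simp
    moreover have "f (- x) \<le> - norm x" using le[of "-x"] dd_negself[of x] by simp
    ultimately show ?thesis using linear_neg[OF lin, of x] by simp
  qed
  have n1: "norm (Blinfun f) \<le> 1"
    by (rule norm_blinfun_bound) (use ab ap in auto)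
  have "norm x \<le> norm (Blinfun f) * norm x"
    using norm_blinfun[of "Blinfun f" x] ap fx by simp
  then have "1 \<le> norm (Blinfun f)" using x by simp
  then show ?thesis using n1 ap fx unfolding supp_funcs_def by auto
qed

lemma Q_tendsto:
  fixes x y :: "'a::real_normed_vector"
  shows "((\<lambda>t::real. (norm (x + t *\<^sub>R y) ^ 2 - norm x ^ 2) / (2 * t)) \<longlongrightarrow> norm x * dd x y) (at_right 0)"
proof -
  have eq: "\<forall>\<^sub>F t in at_right 0. dq x y t * ((norm (x + t *\<^sub>R y) + norm x) / 2)
      = (norm (x + t *\<^sub>R y) ^ 2 - norm x ^ 2) / (2 * t)"
    unfolding eventually_at_right_field
    by (intro exI[of _ 1]) (auto simp: dq_def divide_simps power2_eq_square algebra_simps)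
  have c: "((\<lambda>t::real. norm (x + t *\<^sub>R y)) \<longlongrightarrow> norm (x + 0 *\<^sub>R y)) (at_right 0)"
    by (intro tendsto_intros)
  have "((\<lambda>t. dq x y t * ((norm (x + t *\<^sub>R y) + norm x) / 2)) \<longlongrightarrow> dd x y * ((norm (x + 0 *\<^sub>R y) + norm x) / 2)) (at_right 0)"
    by (intro tendsto_intros dd_tendsto c) simp
  then have "((\<lambda>t. dq x y t * ((norm (x + t *\<^sub>R y) + norm x) / 2)) \<longlongrightarrow> norm x * dd x y) (at_right 0)"
    by (simp add: mult.commute)
  then show ?thesis using tendsto_cong[OF eq] by simp
qed

lemma rho_plus_eq: "rho_plus x y = norm x * dd x y"
  unfolding rho_plus_def by (rule tendsto_Lim) (simp_all add: Q_tendsto)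

lemma rho_minus_eq: "rho_minus x y = - (norm x * dd x (- y))"
  unfolding rho_minus_def
proof (rule tendsto_Lim)
  show "\<not> trivial_limit (at_left (0::real))" by simp
  have "((\<lambda>t::real. - ((norm (x + t *\<^sub>R (- y)) ^ 2 - norm x ^ 2) / (2 * t))) \<longlongrightarrow> - (norm x * dd x (- y))) (at_right 0)"
    by (intro tendsto_minus Q_tendsto)
  then have "((\<lambda>t::real. (norm (x + (- t) *\<^sub>R y) ^ 2 - norm x ^ 2) / (2 * (- t))) \<longlongrightarrow> - (norm x * dd x (- y))) (at_right (- 0))"
    by simp
  then show "((\<lambda>t::real. (norm (x + t *\<^sub>R y) ^ 2 - norm x ^ 2) / (2 * t)) \<longlongrightarrow> - (norm x * dd x (- y))) (at_left 0)"
    unfolding filterlim_at_left_to_right[of _ _ 0] by simp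
qed


theorem lemma2p2:
  fixes x :: "'a::real_normed_vector" and \<epsilon> :: real
  assumes "x \<noteq> 0" and "0 \<le> \<epsilon>" and "\<epsilon> < 2"
  shows "eps_smooth \<epsilon> x \<longleftrightarrow>
         (SUP y\<in>sphere 0 1. rho_plus x y - rho_minus x y) \<le> \<epsilon> * norm x"
proof -
  have nx: "norm x > 0" using assms(1) by simp
  have val: "rho_plus x y - rho_minus x y = norm x * (dd x y + dd x (- y))" for y
    by (simp add: rho_plus_eq rho_minus_eq algebra_simps)
  have bdd: "bdd_above ((\<lambda>y. rho_plus x y - rho_minus x y) ` sphere 0 1)"
  proof (rule bdd_aboveI2[where M = "norm x * 2"])
    fix y :: 'a assume "y \<in> sphere 0 1"
    then have "norm y = 1" by simp
    then have "dd x y + dd x (- y) \<le> 2" using dd_ub[of x y] dd_ub[of x "-y"] by simp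
    then show "rho_plus x y - rho_minus x y \<le> norm x * 2"
      unfolding val using nx by (intro mult_left_mono) auto
  qed
  have ne: "sphere (0::'a) 1 \<noteq> {}"
  proof -
    have "(1 / norm x) *\<^sub>R x \<in> sphere 0 1" using nx by simp
    then show ?thesis by blast
  qed
  have bJ: "bounded (supp_funcs x)"
    unfolding bounded_iff supp_funcs_def by (intro exI[of _ 1]) auto
  show ?thesis
  proof
    assume "eps_smooth \<epsilon> x"
    then have diam: "diameter (supp_funcs x) \<le> \<epsilon>" unfolding eps_smooth_def .
    show "(SUP y\<in>sphere 0 1. rho_plus x y - rho_minus x y) \<le> \<epsilon> * norm x"
    proof (rule cSUP_least[OF ne])
      fix y :: 'a assume y: "y \<in> sphere 0 1"
      then have ny: "norm y = 1" by simp
      obtain f where f: "linear f" "\<forall>z. f z \<le> dd x z" "f y = dd x y"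
        using hahn_banach_point[OF dd_sublin] by blast
      obtain g where g: "linear g" "\<forall>z. g z \<le> dd x z" "g (- y) = dd x (- y)"
        using hahn_banach_point[OF dd_sublin] by blast
      have F: "Blinfun f \<in> supp_funcs x" "blinfun_apply (Blinfun f) = f"
        using lin_to_supp[OF assms(1) f(1)] f(2) by auto
      have G: "Blinfun g \<in> supp_funcs x" "blinfun_apply (Blinfun g) = g"
        using lin_to_supp[OF assms(1) g(1)] g(2) by auto
      have "dd x y + dd x (- y) = f y - g y" using f(3) g(3) linear_neg[OF g(1), of y] by simp
      also have "\<dots> = blinfun_apply (Blinfun f - Blinfun g) y" using F G by (simp add: blinfun.diff_left)
      also have "\<dots> \<le> norm (blinfun_apply (Blinfun f - Blinfun g) y)" by simp
      also have "\<dots> \<le> norm (Blinfun f - Blinfun g) * norm y" by (rule norm_blinfun)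
      also have "\<dots> = dist (Blinfun f) (Blinfun g)" using ny by (simp add: dist_norm)
      also have "\<dots> \<le> diameter (supp_funcs x)" by (rule diameter_bounded_bound[OF bJ F(1) G(1)])
      also have "\<dots> \<le> \<epsilon>" by (rule diam)
      finally have "norm x * (dd x y + dd x (- y)) \<le> norm x * \<epsilon>"
        using nx by (intro mult_left_mono) auto
      then show "rho_plus x y - rho_minus x y \<le> \<epsilon> * norm x" using val[of y] by (simp add: mult.commute)
    qed
  next
    assume S: "(SUP y\<in>sphere 0 1. rho_plus x y - rho_minus x y) \<le> \<epsilon> * norm x"
    have key: "blinfun_apply F y - blinfun_apply G y \<le> \<epsilon>"
      if FG: "F \<in> supp_funcs x" "G \<in> supp_funcs x" and ny: "norm y = 1" for F G y
    proof -
      have "blinfun_apply F y \<le> dd x y" by (rule supp_le_dd[OF FG(1)])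
      moreover have "blinfun_apply G (- y) \<le> dd x (- y)" by (rule supp_le_dd[OF FG(2)])
      moreover have "rho_plus x y - rho_minus x y \<le> \<epsilon> * norm x"
        using cSUP_upper[OF _ bdd, of y] S ny by simp
      then have "norm x * (dd x y + dd x (- y)) \<le> norm x * \<epsilon>" using val[of y] by (simp add: mult.commute)
      then have "dd x y + dd x (- y) \<le> \<epsilon>" using nx by simp
      ultimately show ?thesis by (simp add: blinfun.minus_right)
    qed
    have dFG: "dist F G \<le> \<epsilon>" if FG: "F \<in> supp_funcs x" "G \<in> supp_funcs x" for F G
    proof -
      have "norm (blinfun_apply (F - G) z) \<le> \<epsilon> * norm z" for z
      proof (cases "z = 0")
        case True then show ?thesis by simp
      next
        case False
        then have nz: "norm z > 0" by simp
        define y where "y = (1 / norm z) *\<^sub>R z"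
        have ny: "norm y = 1" unfolding y_def using nz by simp
        have zy: "z = norm z *\<^sub>R y" unfolding y_def using nz by simp
        have "blinfun_apply (F - G) z = norm z * (blinfun_apply F y - blinfun_apply G y)"
          by (subst zy) (simp add: blinfun.diff_left blinfun.scaleR_right algebra_simps)
        moreover have "\<bar>blinfun_apply F y - blinfun_apply G y\<bar> \<le> \<epsilon>"
          using key[OF FG ny] key[OF FG(2) FG(1) ny] by linarith
        ultimately show ?thesis using nz by (simp add: abs_mult mult.commute mult_left_mono)
      qed
      then have "norm (F - G) \<le> \<epsilon>" by (intro norm_blinfun_bound[OF assms(2)])
      then show ?thesis by (simp add: dist_norm)
    qed
    show "eps_smooth \<epsilon> x"
      unfolding eps_smooth_def diameter_def
    proof (cases "supp_funcs x = {}")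
      case True then show "(if supp_funcs x = {} then 0 else SUP (F, G)\<in>supp_funcs x \<times> supp_funcs x. dist F G) \<le> \<epsilon>"
        using assms(2) by simp
    next
      case False
      then have "(SUP (F, G)\<in>supp_funcs x \<times> supp_funcs x. dist F G) \<le> \<epsilon>"
        by (intro cSUP_least) (auto intro: dFG)
      then show "(if supp_funcs x = {} then 0 else SUP (F, G)\<in>supp_funcs x \<times> supp_funcs x. dist F G) \<le> \<epsilon>"
        using False by simp
    qed
  qed
qed

end
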